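(* Let $X$ be a quantity space over a field $K$. (1) If $B=\{b_1,\ldots,b_n\}$ is a basis for $X$, then $B^*=\{[b_1],\ldots,[b_n]\}$ is a basis for the abelian group $X/{\sim}$, and $b_i\mapsto[b_i]$ is injective, so $B^*$ has the same cardinality as $B$. (2) Conversely, if $b_1,\ldots,b_n\in X$ are invertible and $B^*=\{[b_1],\ldots,[b_n]\}$ is a basis for $X/{\sim}$ with $[b_i]\neq[b_j]$ for $i\ne j$, then $B=\{b_1,\ldots,b_n\}$ is a basis for $X$ with the same cardinality as $B^*$.
   Context: A scalable monoid over a field $K$ is a monoid $X$ (written multiplicatively, unit $\mathbf{1}=1_X$) with a map $K\times X\to X$, $(\alpha,x)\mapsto\alpha x$, such that $1x=x$, $\alpha(\beta x)=(\alpha\beta)x$, and $\alpha(xy)=(\alpha x)y=x(\alpha y)$ for all $\alpha,\beta\in K$, $x,y\in X$. It is commutative if $xy=yx$ for all $x,y$. For invertible $b$, $b^0=\mathbf{1}$ and negative powers are powers of $b^{-1}$. A (finite) basis of a commutative scalable monoid $X$ over $K$ is a finite set $B=\{b_1,\ldots,b_n\}$ of invertible elements of $X$ such that every $x\in X$ has an expansion $x=\mu\prod_{i=1}^n b_i^{k_i}$ with $\mu\in K$ and $k_1,\ldots,k_n\in\mathbb{Z}$, and this expansion is unique (i.e. $\mu$ and $(k_1,\ldots,k_n)$ are uniquely determined by $x$). A quantity space over $K$ is a commutative scalable monoid over $K$ that has a finite basis. Elements $x,y$ are commensurable, $x\sim y$, if $\alpha x=\beta y$ for some $\alpha,\beta\in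 K$; this is an equivalence relation and a congruence, its classes are called realms (dimensions), $[x]$ is the realm of $x$, and $X/{\sim}$ is the set of realms with product $[x][y]=[xy]$ and unit $[\mathbf{1}]$; for a quantity space this is a commutative monoid in which every element has an inverse, i.e. an abelian group. A basis of the abelian group $X/{\sim}$ is a finite set $\{c_1,\ldots,c_n\}\subseteq X/{\sim}$ such that every element of $X/{\sim}$ can be written uniquely as $\prod_{i=1}^n c_i^{k_i}$ with $k_i\in\mathbb{Z}$. *)

theory Defs
  imports "HOL-Algebra.Algebra"
begin

text \<open>The quantity space X is the type 'x (a commutative monoid, class comm_monoid_mult),
  with a scalar action smul of a field 'k.\<close>

definition scalable_monoid :: "('k::field \<Rightarrow> 'x::comm_monoid_mult \<Rightarrow> 'x) \<Rightarrow> bool" where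
  "scalable_monoid smul \<longleftrightarrow>
     (\<forall>x. smul 1 x = x) \<and>
     (\<forall>\<alpha> \<beta> x. smul \<alpha> (smul \<beta> x) = smul (\<alpha> * \<beta>) x) \<and>
     (\<forall>\<alpha> x y. smul \<alpha> (x * y) = (smul \<alpha> x) * y \<and> smul \<alpha> (x * y) = x * (smul \<alpha> y))"

definition invertible :: "'x::monoid_mult \<Rightarrow> bool" where
  "invertible x \<longleftrightarrow> (\<exists>y. x * y = 1 \<and> y * x = 1)"

definition qinv :: "'x::monoid_mult \<Rightarrow> 'x" where
  "qinv x = (THE y. x * y = 1 \<and> y * x = 1)"

definition zpow :: "'x::monoid_mult \<Rightarrow> int \<Rightarrow> 'x" where
  "zpow x k = (if 0 \<le> k then x ^ nat k else (qinv x) ^ nat (- k))"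

definition qbasis :: "('k::field \<Rightarrow> 'x::comm_monoid_mult \<Rightarrow> 'x) \<Rightarrow> 'x set \<Rightarrow> bool" where
  "qbasis smul B \<longleftrightarrow> finite B \<and> (\<forall>b\<in>B. invertible b) \<and>
     (\<forall>x. \<exists>!p :: 'k \<times> ('x \<Rightarrow> int).
         (\<forall>b. b \<notin> B \<longrightarrow> snd p b = 0) \<and> x = smul (fst p) (\<Prod>b\<in>B. zpow b (snd p b)))"

definition quantity_space :: "('k::field \<Rightarrow> 'x::comm_monoid_mult \<Rightarrow> 'x) \<Rightarrow> bool" where
  "quantity_space smul \<longleftrightarrow> scalable_monoid smul \<and> (\<exists>B. qbasis smul B)"

definition commensurable :: "('k::field \<Rightarrow> 'x::comm_monoid_mult \<Rightarrow> 'x) \<Rightarrow> 'x \<Rightarrow> 'x \<Rightarrow> bool" where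
  "commensurable smul x y \<longleftrightarrow> (\<exists>\<alpha> \<beta>. smul \<alpha> x = smul \<beta> y)"

definition realm :: "('k::field \<Rightarrow> 'x::comm_monoid_mult \<Rightarrow> 'x) \<Rightarrow> 'x \<Rightarrow> 'x set" where
  "realm smul x = {y. commensurable smul x y}"

definition realms :: "('k::field \<Rightarrow> 'x::comm_monoid_mult \<Rightarrow> 'x) \<Rightarrow> 'x set monoid" where
  "realms smul = \<lparr> carrier = range (realm smul),
      monoid.mult = (\<lambda>A B. realm smul ((SOME a. a \<in> A) * (SOME b. b \<in> B))),
      monoid.one = realm smul 1 \<rparr>"

definition group_basis :: "('a, 'm) monoid_scheme \<Rightarrow> 'a set \<Rightarrow> bool" where
  "group_basis G C \<longleftrightarrow> finite C \<and> C \<subseteq> carrier G \<and>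
     (\<forall>g\<in>carrier G. \<exists>!k :: 'a \<Rightarrow> int. (\<forall>c. c \<notin> C \<longrightarrow> k c = 0) \<and>
         g = finprod G (\<lambda>c. c [^]\<^bsub>G\<^esub> k c) C)"

end

theory Submission
  imports Defs
begin


lemma inv_unique: "(x::'x::monoid_mult) * y = 1 \<Longrightarrow> y' * x = 1 \<Longrightarrow> y = y'"
  by (metis mult.assoc mult_1_left mult_1_right)

lemma qinv: assumes "invertible (b::'x::monoid_mult)" shows "b * qinv b = 1" "qinv b * b = 1"
proof -
  obtain y where y: "b * y = 1" "y * b = 1" using assms unfolding invertible_def by blast
  have "\<exists>!y. b * y = 1 \<and> y * b = 1" using y inv_unique by blast
  hence "b * qinv b = 1 \<and> qinv b * b = 1" unfolding qinv_def by (rule theI')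
  thus "b * qinv b = 1" "qinv b * b = 1" by auto
qed

lemma zpow_succ: assumes "invertible (b::'x::monoid_mult)" shows "zpow b (n+1) = zpow b n * b"
proof (cases "n \<ge> 0")
  case True
  then show ?thesis unfolding zpow_def by (simp add: nat_add_distrib power_commutes)
next
  case False
  define m where "m = nat (-n-1)"
  have m: "n = - int m - 1" using False unfolding m_def by simp
  have "zpow b n = qinv b ^ Suc m" using m unfolding zpow_def by (simp add: nat_add_distrib)
  moreover have "zpow b (n+1) = qinv b ^ m" using m unfolding zpow_def by simp
  moreover have "qinv b ^ Suc m = qinv b ^ m * qinv b" by (rule power_Suc2)
  ultimately show ?thesis using qinv[OF assms] by (metis mult.assoc mult_1_right)
qed

lemma zpow_pred: assumes "invertible (b::'x::monoid_mult)" shows "zpow b (n-1) = zpow b n * qinv b"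
proof -
  have "zpow b n * qinv b = zpow b (n-1) * b * qinv b" using zpow_succ[OF assms, of "n-1"] by simp
  thus ?thesis using qinv[OF assms] by (simp add: mult.assoc)
qed

lemma zpow_add: assumes "invertible (b::'x::monoid_mult)" shows "zpow b (m+n) = zpow b m * zpow b n"
proof (induction n rule: int_induct[where k=0])
  case base then show ?case by (simp add: zpow_def)
next
  case (step1 i) then show ?case using zpow_succ[OF assms] by (metis add.assoc mult.assoc)
next
  case (step2 i) then show ?case using zpow_pred[OF assms] by (metis add_diff_eq mult.assoc)
qed

lemma zpow_invertible: assumes "invertible (b::'x::monoid_mult)" shows "invertible (zpow b n)"
  unfolding invertible_def
proof (rule exI[of _ "zpow b (-n)"])
  show "zpow b n * zpow b (- n) = 1 \<and> zpow b (- n) * zpow b n = 1"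
    using zpow_add[OF assms, of n "-n"] zpow_add[OF assms, of "-n" n] by (simp add: zpow_def)
qed

lemma zpow_0[simp]: "zpow b 0 = 1" by (simp add: zpow_def)
lemma zpow_1[simp]: "zpow b 1 = b" by (simp add: zpow_def)

lemma invertible_mult: "invertible (x::'x::comm_monoid_mult) \<Longrightarrow> invertible y \<Longrightarrow> invertible (x*y)"
  unfolding invertible_def by (metis mult.assoc mult.commute mult_1_right)

lemma invertible_prod: "finite A \<Longrightarrow> (\<And>a. a\<in>A \<Longrightarrow> invertible (f a :: 'x::comm_monoid_mult)) \<Longrightarrow> invertible (prod f A)"
  by (induction A rule: finite_induct) (auto simp: invertible_mult, auto simp: invertible_def)



lemma ex1_uniq: "\<exists>!x. P x \<Longrightarrow> P a \<Longrightarrow> P b \<Longrightarrow> a = b" by blast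

locale QS =
  fixes smul :: "'k::field \<Rightarrow> 'x::comm_monoid_mult \<Rightarrow> 'x" and C :: "'x set"
  assumes sm: "scalable_monoid smul" and qb: "qbasis smul C"
begin

lemma sm1: "smul 1 x = x" using sm unfolding scalable_monoid_def by blast
lemma sm2: "smul a (smul b x) = smul (a*b) x" using sm unfolding scalable_monoid_def by blast
lemma sm3: "smul a (x*y) = smul a x * y" using sm unfolding scalable_monoid_def by blast
lemma sm4: "smul a (x*y) = x * smul a y" using sm unfolding scalable_monoid_def by blast

lemma finC: "finite C" and invC: "b \<in> C \<Longrightarrow> invertible b"
  using qb unfolding qbasis_def by auto

definition mono :: "('x \<Rightarrow> int) \<Rightarrow> 'x" where "mono k = (\<Prod>b\<in>C. zpow b (k b))"

definition sup :: "('x \<Rightarrow> int) \<Rightarrow> bool" where "sup k \<longleftrightarrow> (\<forall>b. b \<notin> C \<longrightarrow> k b = 0)"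

definition pp :: "'x \<Rightarrow> 'k \<times> ('x \<Rightarrow> int)" where
  "pp x = (THE p. (\<forall>b. b \<notin> C \<longrightarrow> snd p b = 0) \<and> x = smul (fst p) (\<Prod>b\<in>C. zpow b (snd p b)))"

definition cf where "cf x = fst (pp x)"
definition ex where "ex x = snd (pp x)"

lemma pp_prop: "(\<forall>b. b \<notin> C \<longrightarrow> snd (pp x) b = 0) \<and> x = smul (fst (pp x)) (\<Prod>b\<in>C. zpow b (snd (pp x) b))"
  unfolding pp_def by (rule theI') (use qb in \<open>auto simp: qbasis_def\<close>)

lemma rep: "x = smul (cf x) (mono (ex x))" and sup_ex: "sup (ex x)"
  using pp_prop[of x] unfolding cf_def ex_def mono_def sup_def by auto

lemma uniq: assumes "sup k" "x = smul \<mu> (mono k)" shows "cf x = \<mu>" "ex x = k"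
proof -
  have u: "\<exists>!p :: 'k \<times> ('x \<Rightarrow> int). (\<forall>b. b \<notin> C \<longrightarrow> snd p b = 0) \<and> x = smul (fst p) (\<Prod>b\<in>C. zpow b (snd p b))"
    using qb unfolding qbasis_def by auto
  have "pp x = (\<mu>, k)" unfolding pp_def
    by (rule the1_equality[OF u]) (use assms in \<open>auto simp: sup_def mono_def\<close>)
  thus "cf x = \<mu>" "ex x = k" unfolding cf_def ex_def by auto
qed

lemma mono0: "mono (\<lambda>_. 0) = 1" unfolding mono_def by simp

lemma mono_add: "mono (\<lambda>b. k1 b + k2 b) = mono k1 * mono k2"
  unfolding mono_def by (simp add: zpow_add invC prod.distrib)

lemma ex_one: "ex 1 = (\<lambda>_. 0)" and cf_one: "cf 1 = 1"
  using uniq[of "\<lambda>_. 0" 1 1] by (auto simp: sup_def mono0 sm1)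

lemma ex_smul: "ex (smul a x) = ex x" and cf_smul: "cf (smul a x) = a * cf x"
  using uniq[OF sup_ex, of "smul a x" "a * cf x" x] rep[of x] sm2 by metis+

lemma mult_rep: "x * y = smul (cf x * cf y) (mono (\<lambda>b. ex x b + ex y b))"
proof -
  have "x * y = smul (cf x) (mono (ex x)) * smul (cf y) (mono (ex y))" using rep by metis
  also have "\<dots> = smul (cf x) (mono (ex x) * smul (cf y) (mono (ex y)))" by (rule sm3[symmetric])
  also have "\<dots> = smul (cf x) (smul (cf y) (mono (ex x) * mono (ex y)))" by (simp add: sm4)
  finally show ?thesis by (simp add: sm2 mono_add)
qed

lemma ex_mult: "ex (x * y) = (\<lambda>b. ex x b + ex y b)" and cf_mult: "cf (x*y) = cf x * cf y"
  using uniq[OF _ mult_rep[of x y]] sup_ex[of x] sup_ex[of y] by (auto simp: sup_def)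

lemma ex_mono: "sup k \<Longrightarrow> ex (mono k) = k"
  using uniq[of k "mono k" 1] sm1 by auto

lemma comm_iff: "commensurable smul x y \<longleftrightarrow> ex x = ex y"
proof
  assume "commensurable smul x y"
  then obtain a b where "smul a x = smul b y" unfolding commensurable_def by auto
  thus "ex x = ex y" using ex_smul by metis
next
  assume e: "ex x = ex y"
  have "smul (cf y) x = smul (cf x) y"
    by (metis rep e sm2 mult.commute)
  thus "commensurable smul x y" unfolding commensurable_def by auto
qed

lemma realm_eq: "realm smul x = realm smul y \<longleftrightarrow> ex x = ex y"
proof
  assume "realm smul x = realm smul y"
  moreover have "y \<in> realm smul y" unfolding realm_def comm_iff by simp
  ultimately show "ex x = ex y" unfolding realm_def comm_iff by auto
qed (auto simp: realm_def comm_iff)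

abbreviation "G \<equiv> realms smul"

lemma G_mult: "realm smul x \<otimes>\<^bsub>G\<^esub> realm smul y = realm smul (x * y)"
proof -
  have a: "ex (SOME a. a \<in> realm smul x) = ex x" for x
  proof -
    have "x \<in> realm smul x" unfolding realm_def comm_iff by simp
    hence "(SOME a. a \<in> realm smul x) \<in> realm smul x" by (rule someI)
    thus ?thesis unfolding realm_def comm_iff by simp
  qed
  show ?thesis unfolding realms_def by (simp add: realm_eq ex_mult a)
qed

lemma G_one: "\<one>\<^bsub>G\<^esub> = realm smul 1" and G_carrier: "carrier G = range (realm smul)"
  unfolding realms_def by auto

lemma G_group: "comm_group G"
proof (rule comm_groupI)
  fix x assume "x \<in> carrier G"
  then obtain a where a: "x = realm smul a" by (auto simp: G_carrier)
  have "sup (\<lambda>b. - ex a b)" using sup_ex[of a] by (auto simp: sup_def)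
  hence "realm smul (mono (\<lambda>b. - ex a b)) \<otimes>\<^bsub>G\<^esub> x = \<one>\<^bsub>G\<^esub>"
    by (simp add: a G_mult G_one realm_eq ex_mult ex_mono ex_one)
  thus "\<exists>y\<in>carrier G. y \<otimes>\<^bsub>G\<^esub> x = \<one>\<^bsub>G\<^esub>" by (auto simp: G_carrier)
qed (auto simp: G_carrier G_mult G_one realm_eq ex_mult ac_simps)


lemma G_grp: "group G" using G_group comm_group.axioms(2) by blast
lemma realm_carr: "realm smul x \<in> carrier G" by (simp add: G_carrier)

lemma realm_prod: "finite B \<Longrightarrow> realm smul (\<Prod>b\<in>B. f b) = finprod G (\<lambda>b. realm smul (f b)) B"
proof (induction B rule: finite_induct)
  case empty
  interpret comm_group G by (rule G_group)
  show ?case by (simp add: G_one)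
next
  case (insert a F)
  interpret comm_group G by (rule G_group)
  have "finprod G (\<lambda>b. realm smul (f b)) (insert a F) = realm smul (f a) \<otimes>\<^bsub>G\<^esub> finprod G (\<lambda>b. realm smul (f b)) F"
    using insert by (intro finprod_insert) (auto simp: realm_carr)
  then show ?case using insert by (simp add: G_mult[symmetric])
qed

lemma realm_zpow: assumes "invertible b" shows "realm smul (zpow b n) = realm smul b [^]\<^bsub>G\<^esub> n"
proof (induction n rule: int_induct[where k=0])
  interpret group G by (rule G_grp)
  { case base then show ?case by (simp add: G_one) }
  { case (step1 i) then show ?case using zpow_succ[OF assms, of i]
      by (simp add: G_mult[symmetric] int_pow_mult realm_carr) }
  { case (step2 i)
    have "realm smul (zpow b i) = realm smul (zpow b (i - 1)) \<otimes>\<^bsub>G\<^esub> realm smul b"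
      using zpow_succ[OF assms, of "i-1"] by (simp add: G_mult)
    moreover have "realm smul b [^]\<^bsub>G\<^esub> i = realm smul b [^]\<^bsub>G\<^esub> (i-1) \<otimes>\<^bsub>G\<^esub> realm smul b"
      using int_pow_mult[OF realm_carr, of b "i-1" 1] by (simp add: realm_carr)
    ultimately have "realm smul (zpow b (i - 1)) \<otimes>\<^bsub>G\<^esub> realm smul b = realm smul b [^]\<^bsub>G\<^esub> (i-1) \<otimes>\<^bsub>G\<^esub> realm smul b"
      using step2 by simp
    then show ?case by (simp add: realm_carr) }
qed

lemma L: assumes "finite B" "inj_on (realm smul) B" "\<And>b. b \<in> B \<Longrightarrow> invertible b"
  shows "finprod G (\<lambda>c. c [^]\<^bsub>G\<^esub> (k c :: int)) (realm smul ` B) = realm smul (\<Prod>b\<in>B. zpow b (k (realm smul b)))"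
proof -
  interpret comm_group G by (rule G_group)
  have "finprod G (\<lambda>c. c [^]\<^bsub>G\<^esub> (k c :: int)) (realm smul ` B) = finprod G (\<lambda>b. realm smul b [^]\<^bsub>G\<^esub> k (realm smul b)) B"
    by (rule finprod_reindex) (auto simp: assms Pi_def intro!: int_pow_closed realm_carr)
  also have "\<dots> = finprod G (\<lambda>b. realm smul (zpow b (k (realm smul b)))) B"
    by (intro finprod_cong) (auto simp: realm_zpow assms realm_carr Pi_def)
  finally show ?thesis by (simp add: realm_prod assms)
qed

lemma ind_mono: assumes "b \<in> C" shows "b = mono (\<lambda>c. if c = b then 1 else 0)"
proof -
  have "mono (\<lambda>c. if c = b then 1 else 0) = (\<Prod>c\<in>C. if c = b then c else 1)"
    unfolding mono_def by (intro prod.cong) auto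
  thus ?thesis using assms finC by (simp add: prod.delta)
qed

lemma ex_ind: assumes "b \<in> C" shows "ex b = (\<lambda>c. if c = b then 1 else 0)"
proof -
  have "ex (mono (\<lambda>c. if c = b then 1 else 0)) = (\<lambda>c. if c = b then 1 else 0)"
    by (rule ex_mono) (use assms in \<open>auto simp: sup_def\<close>)
  thus ?thesis using ind_mono[OF assms] by simp
qed

lemma part1: "group_basis G (realm smul ` C) \<and> inj_on (realm smul) C"
proof
  show inj: "inj_on (realm smul) C"
  proof (rule inj_onI)
    fix a b assume ab: "a \<in> C" "b \<in> C" "realm smul a = realm smul b"
    have "ex a = (\<lambda>c. if c = a then 1 else 0)" "ex b = (\<lambda>c. if c = b then 1 else 0)"
      using ex_ind ab by auto
    with ab(3) show "a = b" unfolding realm_eq by (metis zero_neq_one)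
  qed
  show "group_basis G (realm smul ` C)"
    unfolding group_basis_def
  proof (intro conjI ballI)
    show "finite (realm smul ` C)" using finC by simp
    show "realm smul ` C \<subseteq> carrier G" by (auto simp: G_carrier)
    fix g assume "g \<in> carrier G"
    then obtain x where g: "g = realm smul x" by (auto simp: G_carrier)
    have fp: "finprod G (\<lambda>c. c [^]\<^bsub>G\<^esub> (k c :: int)) (realm smul ` C) = realm smul (mono (\<lambda>b. if b \<in> C then k (realm smul b) else 0))" for k
    proof -
      have "(\<Prod>b\<in>C. zpow b (if b \<in> C then k (realm smul b) else 0)) = (\<Prod>b\<in>C. zpow b (k (realm smul b)))"
        by (rule prod.cong) auto
      thus ?thesis using L[OF finC inj invC, of k] unfolding mono_def by simp
    qed
    have sp: "sup (\<lambda>b. if b \<in> C then k (realm smul b) else 0)" for k :: "'x set \<Rightarrow> int"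
      by (simp add: sup_def)
    show "\<exists>!k :: 'x set \<Rightarrow> int. (\<forall>c. c \<notin> realm smul ` C \<longrightarrow> k c = 0) \<and> g = finprod G (\<lambda>c. c [^]\<^bsub>G\<^esub> k c) (realm smul ` C)"
    proof (rule ex_ex1I)
      let ?k = "\<lambda>c. if c \<in> realm smul ` C then ex x (inv_into C (realm smul) c) else 0"
      have kx: "(\<lambda>b. if b \<in> C then ?k (realm smul b) else 0) = ex x"
      proof
        fix b show "(if b \<in> C then ?k (realm smul b) else 0) = ex x b"
          using sup_ex[of x] inv_into_f_f[OF inj] unfolding sup_def by auto
      qed
      have "finprod G (\<lambda>c. c [^]\<^bsub>G\<^esub> ?k c) (realm smul ` C) = realm smul (mono (ex x))"
        using fp[of ?k] kx by simp
      also have "\<dots> = g" unfolding g realm_eq using ex_mono[OF sup_ex] by simp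
      finally show "\<exists>k :: 'x set \<Rightarrow> int. (\<forall>c. c \<notin> realm smul ` C \<longrightarrow> k c = 0) \<and> g = finprod G (\<lambda>c. c [^]\<^bsub>G\<^esub> k c) (realm smul ` C)"
        by (intro exI[of _ ?k]) simp
    next
      fix k1 k2 :: "'x set \<Rightarrow> int"
      assume h1: "(\<forall>c. c \<notin> realm smul ` C \<longrightarrow> k1 c = 0) \<and> g = finprod G (\<lambda>c. c [^]\<^bsub>G\<^esub> k1 c) (realm smul ` C)"
        and h2: "(\<forall>c. c \<notin> realm smul ` C \<longrightarrow> k2 c = 0) \<and> g = finprod G (\<lambda>c. c [^]\<^bsub>G\<^esub> k2 c) (realm smul ` C)"
      have "realm smul (mono (\<lambda>b. if b \<in> C then k1 (realm smul b) else 0)) = realm smul (mono (\<lambda>b. if b \<in> C then k2 (realm smul b) else 0))"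
        using h1 h2 fp[of k1] fp[of k2] by simp
      hence e: "(\<lambda>b. if b \<in> C then k1 (realm smul b) else 0) = (\<lambda>b. if b \<in> C then k2 (realm smul b) else 0)"
        unfolding realm_eq ex_mono[OF sp] .
      have "k1 c = k2 c" for c
      proof (cases "c \<in> realm smul ` C")
        case True
        then obtain b where b: "b \<in> C" "c = realm smul b" by auto
        show ?thesis using fun_cong[OF e, of b] b by simp
      next
        case False then show ?thesis using h1 h2 by simp
      qed
      thus "k1 = k2" by (rule ext)
    qed
  qed
qed

lemma cf_nz: assumes "invertible y" shows "cf y \<noteq> 0"
proof
  assume "cf y = 0"
  obtain z where "y * z = 1" using assms unfolding invertible_def by blast
  hence "cf y * cf z = 1" using cf_mult cf_one by metis
  with \<open>cf y = 0\<close> show False by simp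
qed


lemma part2:
  assumes fin: "finite B" and inv: "\<forall>b\<in>B. invertible b"
    and gb: "group_basis G (realm smul ` B)" and inj: "inj_on (realm smul) B"
  shows "qbasis smul B"
  unfolding qbasis_def
proof (intro conjI allI)
  show "finite B" "\<forall>b\<in>B. invertible b" by fact+
  have invB: "\<And>b. b \<in> B \<Longrightarrow> invertible b" using inv by auto
  have gbu0: "\<forall>g\<in>carrier G. \<exists>!k :: 'x set \<Rightarrow> int. (\<forall>c. c \<notin> realm smul ` B \<longrightarrow> k c = 0) \<and>
         g = finprod G (\<lambda>c. c [^]\<^bsub>G\<^esub> k c) (realm smul ` B)"
    using gb unfolding group_basis_def by (elim conjE) assumption
  note gbu = bspec[OF gbu0]
  have Pinv: "invertible (\<Prod>b\<in>B. zpow b (k b))" for k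
    by (rule invertible_prod[OF fin]) (simp add: zpow_invertible invB)
  fix x
  show "\<exists>!p :: 'k \<times> ('x \<Rightarrow> int). (\<forall>b. b \<notin> B \<longrightarrow> snd p b = 0) \<and> x = smul (fst p) (\<Prod>b\<in>B. zpow b (snd p b))"
  proof (rule ex_ex1I)
    obtain k :: "'x set \<Rightarrow> int" where k: "\<forall>c. c \<notin> realm smul ` B \<longrightarrow> k c = 0"
      "realm smul x = finprod G (\<lambda>c. c [^]\<^bsub>G\<^esub> k c) (realm smul ` B)"
      using ex1_implies_ex[OF gbu[OF realm_carr[of x]]] by blast
    define kx where "kx b = (if b \<in> B then k (realm smul b) else 0)" for b
    define P where "P = (\<Prod>b\<in>B. zpow b (kx b))"
    have "P = (\<Prod>b\<in>B. zpow b (k (realm smul b)))" unfolding P_def kx_def by (rule prod.cong) auto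
    hence "realm smul x = realm smul P" using k(2) L[OF fin inj invB] by simp
    hence e: "ex x = ex P" unfolding realm_eq .
    have nz: "cf P \<noteq> 0" unfolding P_def by (rule cf_nz[OF Pinv])
    have "smul (cf x / cf P) P = smul (cf x / cf P) (smul (cf P) (mono (ex P)))" by (rule arg_cong[OF rep])
    also have "\<dots> = smul (cf x) (mono (ex x))" using nz e[symmetric] by (simp add: sm2)
    also have "\<dots> = x" by (rule rep[symmetric])
    finally have "x = smul (cf x / cf P) P" by simp
    thus "\<exists>p :: 'k \<times> ('x \<Rightarrow> int). (\<forall>b. b \<notin> B \<longrightarrow> snd p b = 0) \<and> x = smul (fst p) (\<Prod>b\<in>B. zpow b (snd p b))"
      by (intro exI[of _ "(cf x / cf P, kx)"]) (simp add: kx_def P_def)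
  next
    fix p1 p2 :: "'k \<times> ('x \<Rightarrow> int)"
    assume h1: "(\<forall>b. b \<notin> B \<longrightarrow> snd p1 b = 0) \<and> x = smul (fst p1) (\<Prod>b\<in>B. zpow b (snd p1 b))"
      and h2: "(\<forall>b. b \<notin> B \<longrightarrow> snd p2 b = 0) \<and> x = smul (fst p2) (\<Prod>b\<in>B. zpow b (snd p2 b))"
    define kG where "kG k c = (if c \<in> realm smul ` B then k (inv_into B (realm smul) c) else 0)" for k :: "'x \<Rightarrow> int" and c
    have fpk: "finprod G (\<lambda>c. c [^]\<^bsub>G\<^esub> kG k c) (realm smul ` B) = realm smul (\<Prod>b\<in>B. zpow b (k b))" for k
    proof -
      have "(\<Prod>b\<in>B. zpow b (kG k (realm smul b))) = (\<Prod>b\<in>B. zpow b (k b))"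
        unfolding kG_def by (rule prod.cong) (auto simp: inv_into_f_f[OF inj])
      thus ?thesis using L[OF fin inj invB, of "kG k"] by simp
    qed
    have rx: "realm smul x = realm smul (\<Prod>b\<in>B. zpow b (snd p b))"
      if "x = smul (fst p) (\<Prod>b\<in>B. zpow b (snd p b))" for p :: "'k \<times> ('x \<Rightarrow> int)"
      unfolding realm_eq using that by (simp add: ex_smul)
    have P1: "(\<forall>c. c \<notin> realm smul ` B \<longrightarrow> kG k c = 0) \<and> realm smul x = finprod G (\<lambda>c. c [^]\<^bsub>G\<^esub> kG k c) (realm smul ` B)"
      if "x = smul (fst p) (\<Prod>b\<in>B. zpow b (snd p b))" "k = snd p" for p :: "'k \<times> ('x \<Rightarrow> int)" and k
      using rx[OF that(1)] fpk[of k] that(2) by (simp add: kG_def)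
    have "kG (snd p1) = kG (snd p2)"
      by (rule ex1_uniq[where P="\<lambda>k. (\<forall>c. c \<notin> realm smul ` B \<longrightarrow> k c = 0) \<and> realm smul x = finprod G (\<lambda>c. c [^]\<^bsub>G\<^esub> k c) (realm smul ` B)", OF gbu[OF realm_carr[of x]] P1[OF conjunct2[OF h1] refl] P1[OF conjunct2[OF h2] refl]])
    have sk: "snd p1 = snd p2"
    proof
      fix b show "snd p1 b = snd p2 b"
      proof (cases "b \<in> B")
        case True
        have "kG (snd p1) (realm smul b) = kG (snd p2) (realm smul b)" using \<open>kG (snd p1) = kG (snd p2)\<close> by simp
        thus ?thesis using True by (simp add: kG_def inv_into_f_f[OF inj])
      next
        case False thus ?thesis using h1 h2 by simp
      qed
    qed
    define P where "P = (\<Prod>b\<in>B. zpow b (snd p1 b))"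
    have nz: "cf P \<noteq> 0" unfolding P_def by (rule cf_nz[OF Pinv])
    have "cf x = fst p1 * cf P" using h1 unfolding P_def by (simp add: cf_smul)
    moreover have "cf x = fst p2 * cf P" using h2 sk unfolding P_def by (simp add: cf_smul)
    ultimately have "fst p1 = fst p2" using nz by simp
    thus "p1 = p2" using sk by (simp add: prod_eq_iff)
  qed
qed

end

theorem mainTheorem14:
  fixes smul :: "'k::field \<Rightarrow> 'x::comm_monoid_mult \<Rightarrow> 'x"
  assumes "quantity_space smul"
  shows "(\<forall>B. qbasis smul B \<longrightarrow>
            group_basis (realms smul) (realm smul ` B) \<and> inj_on (realm smul) B \<and>
            card (realm smul ` B) = card B)
       \<and> (\<forall>B. finite B \<and> (\<forall>b\<in>B. invertible b) \<and>
            group_basis (realms smul) (realm smul ` B) \<and> inj_on (realm smul) B \<longrightarrow>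
            qbasis smul B \<and> card B = card (realm smul ` B))"
proof -
  have sm: "scalable_monoid smul" and "\<exists>B. qbasis smul B" using assms unfolding quantity_space_def by auto
  then obtain B0 where B0: "qbasis smul B0" by blast
  show ?thesis
  proof (intro conjI allI impI)
    fix B assume "qbasis smul B"
    then interpret QS smul B by unfold_locales (rule sm)
    show "group_basis (realms smul) (realm smul ` B)" "inj_on (realm smul) B" using part1 by auto
    thus "card (realm smul ` B) = card B" by (simp add: card_image)
  next
    interpret QS smul B0 by unfold_locales (rule sm, rule B0)
    fix B assume h: "finite B \<and> (\<forall>b\<in>B. invertible b) \<and> group_basis (realms smul) (realm smul ` B) \<and> inj_on (realm smul) B"
    thus "qbasis smul B" using part2 by blast
    show "card B = card (realm smul ` B)" using h by (simp add: card_image)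
  qed
qed

end
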